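(* Let $\ell_1,\dots,\ell_T\in\{\theta_1,\theta_2\}$ with $T_1\ge1$ labels equal to $\theta_1$ and $T_2\ge1$ labels equal to $\theta_2$ ($T_1+T_2=T$). For a prior log-odds $\pi\in\mathbb R$ and an RBPSR $C_\rho$, consider minimizing $$J(w_1,\dots,w_T)=\sum_{t=1}^T w(\ell_t)\,C_\rho\bigl(\ell_t,\sigma(w_t+\pi)\bigr),\qquad w(\theta_1)=\frac{\sigma(\pi)}{T_1},\ w(\theta_2)=\frac{1-\sigma(\pi)}{T_2},$$ over $(w_1,\dots,w_T)$ in the extended reals subject to $-\infty\le w_1\le w_2\le\cdots\le w_T\le\infty$. Then this problem has the unique solution $$w_t=\operatorname{logit}\,\mathrm{PAV}_t\bigl((\ell_1,\dots,\ell_T),(1,1)\bigr)-\operatorname{logit}\frac{T_1}{T},\qquad t=1,\dots,T,$$ and this solution is simultaneously optimal for every RBPSR $C_\rho$ and every $\pi\in\mathbb R$.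
   Context: A regular binary proper scoring rule (RBPSR) is a function $C_\rho:\{\theta_1,\theta_2\}\times[0,1]\to[0,\infty]$ given by $C_\rho(\theta_1,q)=\int_q^1\frac{\rho(\eta)}{\eta}\,d\eta$ and $C_\rho(\theta_2,q)=\int_0^q\frac{\rho(\eta)}{1-\eta}\,d\eta$, where $\rho$ is a probability distribution on $[0,1]$ (possibly containing Dirac point masses), and these integrals are finite except that $C_\rho(\theta_1,0)$ and $C_\rho(\theta_2,1)$ may equal $\infty$. $\operatorname{logit}(p)=\log\frac{p}{1-p}$, a bijection from $[0,1]$ onto $[-\infty,\infty]$, with inverse $\sigma(w)=\frac{1}{1+e^{-w}}$ (with $\sigma(\pm\infty)\in\{0,1\}$). For weights $v_1,v_2>0$, $\mathrm{PAV}_t\bigl((\ell_1,\dots,\ell_T),(v_1,v_2)\bigr)=\max_{1\le i\le t}\min_{t\le j\le T}\frac{m_{i,j}v_1}{m_{i,j}v_1+n_{i,j}v_2}$, where $m_{i,j},n_{i,j}$ are the numbers of $\theta_1$- and $\theta_2$-labels among $\ell_i,\dots,\ell_j$.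
   Formalization: Uniqueness of the solution is claimed only for $\rho$ with $\rho$((a,b)) > 0 whenever 0 <= a < b <= 1; a point mass of $\rho$ at q enters $C_\rho(\theta_1,q)$ (over [q,1]) but not $C_\rho(\theta_2,q)$ (over [0,q)). Apart from conventions, each condition added here is assumed in the paper as well or is needed for the statement above to hold. *)

theory Defs
  imports "HOL-Probability.Probability"
begin

datatype label = Th1 | Th2

text \<open>A regular binary proper scoring rule is given by a probability distribution rho
  on [0,1] (a Borel probability measure on the reals concentrated on [0,1]).\<close>
definition rbpsr_dist :: "real measure \<Rightarrow> bool" where
  "rbpsr_dist rho \<longleftrightarrow> prob_space rho \<and> sets rho = sets borel \<and> emeasure rho {0..1} = 1"

text \<open>Point-mass convention: a mass at eta = q is charged to theta_1 (interval [q,1]) and not to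
  theta_2 (interval [0,q)).  Values in [0,\<infinity>]; 1/0 = \<infinity>.\<close>
definition Crho :: "real measure \<Rightarrow> label \<Rightarrow> real \<Rightarrow> ennreal" where
  "Crho rho l q = (case l of
      Th1 \<Rightarrow> (\<integral>\<^sup>+ eta. indicator {q..1} eta * inverse (ennreal eta) \<partial>rho)
    | Th2 \<Rightarrow> (\<integral>\<^sup>+ eta. indicator {0..<q} eta * inverse (ennreal (1 - eta)) \<partial>rho))"

definition sigm :: "ereal \<Rightarrow> real" where
  "sigm w = (case w of ereal r \<Rightarrow> 1 / (1 + exp (- r)) | PInfty \<Rightarrow> 1 | MInfty \<Rightarrow> 0)"

definition logit :: "real \<Rightarrow> ereal" where
  "logit p = (if p = 0 then - \<infinity> else if p = 1 then \<infinity> else ereal (ln (p / (1 - p))))"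

definition lweight :: "label list \<Rightarrow> real \<Rightarrow> label \<Rightarrow> real" where
  "lweight ls pr l = (case l of
      Th1 \<Rightarrow> sigm (ereal pr) / real (count_list ls Th1)
    | Th2 \<Rightarrow> (1 - sigm (ereal pr)) / real (count_list ls Th2))"

definition Jobj :: "real measure \<Rightarrow> real \<Rightarrow> label list \<Rightarrow> ereal list \<Rightarrow> ennreal" where
  "Jobj rho pr ls ws = (\<Sum>t<length ls.
      ennreal (lweight ls pr (ls ! t)) * Crho rho (ls ! t) (sigm (ws ! t + ereal pr)))"

definition feasible :: "nat \<Rightarrow> ereal list \<Rightarrow> bool" where
  "feasible T ws \<longleftrightarrow> length ws = T \<and> sorted ws"

definition is_minimizer :: "real measure \<Rightarrow> real \<Rightarrow> label list \<Rightarrow> ereal list \<Rightarrow> bool" where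
  "is_minimizer rho pr ls ws \<longleftrightarrow> feasible (length ls) ws \<and>
     (\<forall>ws'. feasible (length ls) ws' \<longrightarrow> Jobj rho pr ls ws \<le> Jobj rho pr ls ws')"

text \<open>PAV with 0-based indices: segment i..j (inclusive) is take (j-i+1) (drop i ls).\<close>
definition seg_ratio :: "label list \<Rightarrow> real \<Rightarrow> real \<Rightarrow> nat \<Rightarrow> nat \<Rightarrow> real" where
  "seg_ratio ls v1 v2 i j = (let s = take (Suc j - i) (drop i ls);
       m = real (count_list s Th1); n = real (count_list s Th2)
     in m * v1 / (m * v1 + n * v2))"

definition PAV :: "label list \<Rightarrow> real \<Rightarrow> real \<Rightarrow> nat \<Rightarrow> real" where
  "PAV ls v1 v2 t = Max ((\<lambda>i. Min ((\<lambda>j. seg_ratio ls v1 v2 i j) ` {t..<length ls})) ` {0..t})"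

definition pav_solution :: "label list \<Rightarrow> ereal list" where
  "pav_solution ls = map (\<lambda>t. logit (PAV ls 1 1 t)
       - logit (real (count_list ls Th1) / real (length ls))) [0..<length ls]"

text \<open>Strict propriety condition (full support of rho on [0,1]), used for uniqueness.\<close>
definition full_support :: "real measure \<Rightarrow> bool" where
  "full_support rho \<longleftrightarrow> (\<forall>a b. 0 \<le> a \<longrightarrow> a < b \<longrightarrow> b \<le> 1 \<longrightarrow> emeasure rho {a<..<b} > 0)"

end

theory Submission
  imports Defs
begin

definition cnt :: "label list \<Rightarrow> label \<Rightarrow> nat \<Rightarrow> nat \<Rightarrow> nat" where
  "cnt ls x i j = (\<Sum>t\<in>{i..<j}. if ls!t = x then 1 else 0)"

definition Dv :: "label list \<Rightarrow> real \<Rightarrow> nat \<Rightarrow> nat \<Rightarrow> real" where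
  "Dv ls e i j = real (cnt ls Th1 i j) * (1-e) - real (cnt ls Th2 i j) * e"

lemma count_list_sum: "count_list xs x = (\<Sum>t<length xs. if xs!t = x then 1 else 0)"
  by (induction xs) (auto simp del: sum.lessThan_Suc simp add: sum.lessThan_Suc_shift)

lemma label_neq1[simp]: "l \<noteq> Th1 \<longleftrightarrow> l = Th2" by (cases l) auto
lemma label_neq2[simp]: "l \<noteq> Th2 \<longleftrightarrow> l = Th1" by (cases l) auto

lemma seg_cnt:
  assumes "i \<le> j" "j < length ls"
  shows "count_list (take (Suc j - i) (drop i ls)) x = cnt ls x i (Suc j)"
proof -
  have len: "length (take (Suc j - i) (drop i ls)) = Suc j - i" using assms by simp
  have "count_list (take (Suc j - i) (drop i ls)) x = (\<Sum>t<Suc j - i. if ls!(i+t) = x then 1 else 0)"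
    unfolding count_list_sum len using assms by (intro sum.cong) auto
  also have "\<dots> = (\<Sum>t\<in>{i..<Suc j}. if ls!t = x then 1 else 0)"
    using sum.shift_bounds_nat_ivl[of "\<lambda>t. if ls!t = x then 1 else (0::nat)" 0 i "Suc j - i"] assms
    by (simp add: lessThan_atLeast0 add.commute)
  finally show ?thesis by (simp add: cnt_def)
qed

lemma cnt_add: "i \<le> j \<Longrightarrow> j \<le> k \<Longrightarrow> cnt ls x i k = cnt ls x i j + cnt ls x j k"
  unfolding cnt_def by (simp add: sum.atLeastLessThan_concat)

lemma cnt_tot: "i \<le> j \<Longrightarrow> cnt ls Th1 i j + cnt ls Th2 i j = j - i"
proof -
  have "cnt ls Th1 i j + cnt ls Th2 i j = (\<Sum>t\<in>{i..<j}. (1::nat))"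
    unfolding cnt_def sum.distrib[symmetric] by (intro sum.cong) (auto split: label.split)
  thus "i \<le> j \<Longrightarrow> ?thesis" by simp
qed

lemma Dv_add: "i \<le> j \<Longrightarrow> j \<le> k \<Longrightarrow> Dv ls e i k = Dv ls e i j + Dv ls e j k"
  unfolding Dv_def by (simp add: cnt_add[of i j k] algebra_simps)

lemma seg_ratio_eq:
  assumes "i \<le> j" "j < length ls"
  shows "seg_ratio ls 1 1 i j = real (cnt ls Th1 i (Suc j)) / (real (cnt ls Th1 i (Suc j)) + real (cnt ls Th2 i (Suc j)))"
  unfolding seg_ratio_def Let_def using assms by (simp add: seg_cnt)

lemma seg_ratio_cmp:
  assumes "i \<le> j" "j < length ls"
  shows "(e < seg_ratio ls 1 1 i j \<longleftrightarrow> 0 < Dv ls e i (Suc j))"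
    "(seg_ratio ls 1 1 i j \<le> e \<longleftrightarrow> Dv ls e i (Suc j) \<le> 0)"
    "(seg_ratio ls 1 1 i j < e \<longleftrightarrow> Dv ls e i (Suc j) < 0)"
    "0 \<le> seg_ratio ls 1 1 i j" "seg_ratio ls 1 1 i j \<le> 1"
proof -
  define m where "m = real (cnt ls Th1 i (Suc j))"
  define n where "n = real (cnt ls Th2 i (Suc j))"
  have mn: "m + n = real (Suc j - i)" unfolding m_def n_def
    using cnt_tot[of i "Suc j" ls] assms by (metis Suc_leD le_SucI of_nat_add)
  hence pos: "m + n > 0" using assms by simp
  have r: "seg_ratio ls 1 1 i j = m / (m+n)" using seg_ratio_eq[OF assms] m_def n_def by simp
  have D: "Dv ls e i (Suc j) = m * (1-e) - n * e" unfolding Dv_def m_def n_def by simp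
  have m0: "m \<ge> 0" "n \<ge> 0" unfolding m_def n_def by auto
  show "(e < seg_ratio ls 1 1 i j \<longleftrightarrow> 0 < Dv ls e i (Suc j))"
    unfolding r D using pos by (simp add: field_simps)
  show "(seg_ratio ls 1 1 i j \<le> e \<longleftrightarrow> Dv ls e i (Suc j) \<le> 0)"
    unfolding r D using pos by (simp add: field_simps)
  show "(seg_ratio ls 1 1 i j < e \<longleftrightarrow> Dv ls e i (Suc j) < 0)"
    unfolding r D using pos by (simp add: field_simps)
  show "0 \<le> seg_ratio ls 1 1 i j" unfolding r using pos m0 by simp
  show "seg_ratio ls 1 1 i j \<le> 1" unfolding r using pos m0 by simp
qed

lemma PAV_cmp:
  assumes t: "t < length ls"
  shows "e < PAV ls 1 1 t \<longleftrightarrow> (\<exists>i\<le>t. \<forall>j. t \<le> j \<and> j < length ls \<longrightarrow> 0 < Dv ls e i (Suc j))"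
    "PAV ls 1 1 t \<le> e \<longleftrightarrow> (\<forall>i\<le>t. \<exists>j. t \<le> j \<and> j < length ls \<and> Dv ls e i (Suc j) \<le> 0)"
    "PAV ls 1 1 t < e \<longleftrightarrow> (\<forall>i\<le>t. \<exists>j. t \<le> j \<and> j < length ls \<and> Dv ls e i (Suc j) < 0)"
proof -
  have ne: "{t..<length ls} \<noteq> {}" using t by auto
  show "e < PAV ls 1 1 t \<longleftrightarrow> (\<exists>i\<le>t. \<forall>j. t \<le> j \<and> j < length ls \<longrightarrow> 0 < Dv ls e i (Suc j))"
    unfolding PAV_def using ne t by (simp add: Max_gr_iff Min_gr_iff seg_ratio_cmp) fastforce
  show "PAV ls 1 1 t \<le> e \<longleftrightarrow> (\<forall>i\<le>t. \<exists>j. t \<le> j \<and> j < length ls \<and> Dv ls e i (Suc j) \<le> 0)"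
    unfolding PAV_def using ne t by (simp add: Max_le_iff Min_le_iff seg_ratio_cmp) fastforce
  show "PAV ls 1 1 t < e \<longleftrightarrow> (\<forall>i\<le>t. \<exists>j. t \<le> j \<and> j < length ls \<and> Dv ls e i (Suc j) < 0)"
    unfolding PAV_def using ne t by (simp add: Max_less_iff Min_less_iff seg_ratio_cmp) fastforce
qed

lemma PAV_range:
  assumes t: "t < length ls"
  shows "0 \<le> PAV ls 1 1 t" "PAV ls 1 1 t \<le> 1"
proof -
  have ne: "{t..<length ls} \<noteq> {}" using t by auto
  show "0 \<le> PAV ls 1 1 t" unfolding PAV_def using ne t
    by (auto simp: Max_ge_iff Min_ge_iff seg_ratio_cmp intro!: bexI[of _ 0])
  show "PAV ls 1 1 t \<le> 1" unfolding PAV_def using ne t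
    by (auto simp: Max_le_iff Min_le_iff intro!: bexI[of _ t] seg_ratio_cmp(5))
qed

lemma PAV_mono:
  assumes "s \<le> t" "t < length ls"
  shows "PAV ls 1 1 s \<le> PAV ls 1 1 t"
proof (rule ccontr)
  assume "\<not> ?thesis"
  hence "PAV ls 1 1 t < PAV ls 1 1 s" by simp
  then obtain i where "i \<le> s" "\<forall>j. s \<le> j \<and> j < length ls \<longrightarrow> 0 < Dv ls (PAV ls 1 1 t) i (Suc j)"
    using PAV_cmp(1)[of s ls "PAV ls 1 1 t"] assms by auto
  moreover have "\<not> PAV ls 1 1 t < PAV ls 1 1 t" by simp
  ultimately show False
    using PAV_cmp(1)[of t ls "PAV ls 1 1 t"] assms by (meson order_trans)
qed

lemma K1:
  assumes k: "k < length ls" and gt: "e < PAV ls 1 1 k"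
    and prev: "k = 0 \<or> PAV ls 1 1 (k-1) \<le> e"
    and j: "k \<le> j" "j < length ls"
  shows "0 < Dv ls e k (Suc j)"
proof -
  obtain i where i: "i \<le> k" "\<forall>j. k \<le> j \<and> j < length ls \<longrightarrow> 0 < Dv ls e i (Suc j)"
    using PAV_cmp(1)[OF k, of e] gt by auto
  show ?thesis
  proof (cases "i = k")
    case True thus ?thesis using i j by auto
  next
    case False
    hence ik: "i \<le> k - 1" "k > 0" using i by auto
    hence le: "PAV ls 1 1 (k-1) \<le> e" using prev by auto
    obtain j0 where j0: "k - 1 \<le> j0" "j0 < length ls" "Dv ls e i (Suc j0) \<le> 0"
      using PAV_cmp(2)[of "k-1" ls e] le ik k by auto
    have "j0 = k - 1" using j0 i(2) by (cases "k \<le> j0") auto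
    hence "Dv ls e i k \<le> 0" using j0 ik by simp
    moreover have "Dv ls e i (Suc j) = Dv ls e i k + Dv ls e k (Suc j)"
      using Dv_add[of i k "Suc j"] ik j by simp
    moreover have "0 < Dv ls e i (Suc j)" using i j by auto
    ultimately show ?thesis by linarith
  qed
qed

lemma K2:
  assumes k: "0 < k" "k \<le> length ls" and le: "PAV ls 1 1 (k-1) \<le> e"
    and nxt: "k = length ls \<or> e < PAV ls 1 1 k" and i: "i < k"
  shows "Dv ls e i k \<le> 0"
proof -
  have "\<exists>j. k - 1 \<le> j \<and> j < length ls \<and> Dv ls e i (Suc j) \<le> 0"
    using PAV_cmp(2)[of "k-1" ls e] le i k by (simp add: less_Suc_eq_le)
  then obtain j where j: "k - 1 \<le> j" "j < length ls" "Dv ls e i (Suc j) \<le> 0" by blast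
  show ?thesis
  proof (cases "j = k - 1")
    case True thus ?thesis using j k by simp
  next
    case False
    hence kj: "k \<le> j" "k < length ls" using j by auto
    have "0 < Dv ls e k (Suc j)" using K1[OF kj(2) _ _ kj(1) j(2)] nxt le kj by auto
    moreover have "Dv ls e i (Suc j) = Dv ls e i k + Dv ls e k (Suc j)"
      using Dv_add[of i k "Suc j"] i kj by simp
    ultimately show ?thesis using j by linarith
  qed
qed

lemma K2s:
  assumes k: "0 < k" "k \<le> length ls" and lt: "PAV ls 1 1 (k-1) < e"
    and nxt: "k = length ls \<or> e < PAV ls 1 1 k" and i: "i < k"
  shows "Dv ls e i k < 0"
proof -
  have "\<exists>j. k - 1 \<le> j \<and> j < length ls \<and> Dv ls e i (Suc j) < 0"
    using PAV_cmp(3)[of "k-1" ls e] lt i k by (simp add: less_Suc_eq_le)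
  then obtain j where j: "k - 1 \<le> j" "j < length ls" "Dv ls e i (Suc j) < 0" by blast
  show ?thesis
  proof (cases "j = k - 1")
    case True thus ?thesis using j k by simp
  next
    case False
    hence kj: "k \<le> j" "k < length ls" using j by auto
    have "0 < Dv ls e k (Suc j)" using K1[OF kj(2) _ _ kj(1) j(2)] nxt lt kj by auto
    moreover have "Dv ls e i (Suc j) = Dv ls e i k + Dv ls e k (Suc j)"
      using Dv_add[of i k "Suc j"] i kj by simp
    ultimately show ?thesis using j by linarith
  qed
qed

definition phi :: "real \<Rightarrow> real \<Rightarrow> real \<Rightarrow> real" where
  "phi v1 v2 x = x* v1/(x* v1 + (1-x)* v2)"

definition ethr :: "real \<Rightarrow> real \<Rightarrow> real \<Rightarrow> real" where
  "ethr v1 v2 h = h* v2/(h* v2 + (1-h)* v1)"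

lemma phi_cmp:
  assumes v: "v1 > 0" "v2 > 0" and x: "0 \<le> x" "x \<le> 1" and h: "0 \<le> h" "h \<le> 1"
  shows "phi v1 v2 x \<le> h \<longleftrightarrow> x \<le> ethr v1 v2 h"
    "phi v1 v2 x < h \<longleftrightarrow> x < ethr v1 v2 h"
proof -
  have d1: "x* v1 + (1-x)* v2 > 0"
  proof (cases "x = 0")
    case True thus ?thesis using v by simp
  next
    case False thus ?thesis using v x by (smt (verit) mult_nonneg_nonneg mult_pos_pos)
  qed
  have d2: "h* v2 + (1-h)* v1 > 0"
  proof (cases "h = 0")
    case True thus ?thesis using v by simp
  next
    case False thus ?thesis using v h by (smt (verit) mult_nonneg_nonneg mult_pos_pos)
  qed
  have "phi v1 v2 x \<le> h \<longleftrightarrow> x* v1 \<le> h*(x* v1 + (1-x)* v2)"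
    unfolding phi_def using d1 by (simp add: divide_le_eq)
  also have "\<dots> \<longleftrightarrow> x * (h* v2 + (1-h)* v1) \<le> h* v2" by (simp add: algebra_simps)
  also have "\<dots> \<longleftrightarrow> x \<le> ethr v1 v2 h" unfolding ethr_def using d2 by (simp add: le_divide_eq)
  finally show "phi v1 v2 x \<le> h \<longleftrightarrow> x \<le> ethr v1 v2 h" .
  have "phi v1 v2 x < h \<longleftrightarrow> x* v1 < h*(x* v1 + (1-x)* v2)"
    unfolding phi_def using d1 by (simp add: divide_less_eq)
  also have "\<dots> \<longleftrightarrow> x * (h* v2 + (1-h)* v1) < h* v2" by (simp add: algebra_simps)
  also have "\<dots> \<longleftrightarrow> x < ethr v1 v2 h" unfolding ethr_def using d2 by (simp add: less_divide_eq)
  finally show "phi v1 v2 x < h \<longleftrightarrow> x < ethr v1 v2 h" .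
qed

lemma ethr0: "v1 > 0 \<Longrightarrow> ethr v1 v2 0 = 0" by (simp add: ethr_def)

lemma sign_rel:
  assumes v: "v1 > 0" "v2 > 0" and h: "0 < h" "h < 1" and m: "m \<ge> 0" "n \<ge> 0"
  defines "e \<equiv> ethr v1 v2 h"
  shows "0 < m*(1-e) - n*e \<Longrightarrow> n* v2/(1-h) < m* v1/h"
    "m*(1-e) - n*e \<le> 0 \<Longrightarrow> m* v1/h \<le> n* v2/(1-h)"
    "m*(1-e) - n*e < 0 \<Longrightarrow> m* v1/h < n* v2/(1-h)"
proof -
  define d where "d = h* v2 + (1-h)* v1"
  have d: "d > 0" unfolding d_def using v h by (smt (verit) mult_pos_pos)
  have e_eq: "e = h* v2/d" unfolding e_def ethr_def d_def by simp
  have "1 - e = (d - h* v2)/d" using d by (simp add: e_eq field_simps)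
  also have "d - h* v2 = (1-h)* v1" by (simp add: d_def)
  finally have e1: "1 - e = (1-h)* v1/d" .
  have E: "m*(1-e) - n*e = (m* v1*(1-h) - n* v2*h)/d"
    using d by (subst e1, subst e_eq) (simp add: field_simps)
  have F: "m* v1/h - n* v2/(1-h) = (m* v1*(1-h) - n* v2*h)/(h*(1-h))"
    using h by (simp add: field_simps)
  have hp: "h*(1-h) > 0" using h by simp
  show "0 < m*(1-e) - n*e \<Longrightarrow> n* v2/(1-h) < m* v1/h"
  proof -
    assume "0 < m*(1-e) - n*e"
    hence "0 < m* v1*(1-h) - n* v2*h" unfolding E using d by (simp add: zero_less_divide_iff)
    hence "0 < m* v1/h - n* v2/(1-h)" unfolding F using hp by simp
    thus ?thesis by simp
  qed
  show "m*(1-e) - n*e \<le> 0 \<Longrightarrow> m* v1/h \<le> n* v2/(1-h)"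
  proof -
    assume "m*(1-e) - n*e \<le> 0"
    hence "m* v1*(1-h) - n* v2*h \<le> 0" unfolding E using d by (simp add: divide_le_0_iff)
    hence "m* v1/h - n* v2/(1-h) \<le> 0" unfolding F using hp by (simp add: divide_le_0_iff)
    thus ?thesis by simp
  qed
  show "m*(1-e) - n*e < 0 \<Longrightarrow> m* v1/h < n* v2/(1-h)"
  proof -
    assume "m*(1-e) - n*e < 0"
    hence "m* v1*(1-h) - n* v2*h < 0" unfolding E using d by (simp add: divide_less_0_iff)
    hence "m* v1/h - n* v2/(1-h) < 0" unfolding F using hp by (simp add: divide_less_0_iff)
    thus ?thesis by simp
  qed
qed

definition c1 :: "label list \<Rightarrow> real \<Rightarrow> real \<Rightarrow> nat \<Rightarrow> ennreal" where
  "c1 ls v1 h t = (if ls!t = Th1 then ennreal v1 * inverse (ennreal h) else 0)"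
definition c2 :: "label list \<Rightarrow> real \<Rightarrow> real \<Rightarrow> nat \<Rightarrow> ennreal" where
  "c2 ls v2 h t = (if ls!t = Th2 then ennreal v2 * inverse (ennreal (1-h)) else 0)"

lemma sum_if_const: "(\<Sum>t\<in>A. if P t then c else 0) = (of_nat (\<Sum>t\<in>A. if P t then 1 else 0) :: 'a::semiring_1) * c"
proof -
  have "(\<Sum>t\<in>A. if P t then c else 0) = (\<Sum>t\<in>A. (of_nat (if P t then 1 else 0) :: 'a) * c)"
    by (intro sum.cong) auto
  thus ?thesis by (simp add: sum_distrib_right)
qed

lemma sum_c1: "(\<Sum>t\<in>{i..<j}. c1 ls v1 h t) = of_nat (cnt ls Th1 i j) * (ennreal v1 * inverse (ennreal h))"
  unfolding c1_def cnt_def by (rule sum_if_const)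
lemma sum_c2: "(\<Sum>t\<in>{i..<j}. c2 ls v2 h t) = of_nat (cnt ls Th2 i j) * (ennreal v2 * inverse (ennreal (1-h)))"
  unfolding c2_def cnt_def by (rule sum_if_const)

lemma sum_c1_real: "0 < h \<Longrightarrow> v1 > 0 \<Longrightarrow> (\<Sum>t\<in>{i..<j}. c1 ls v1 h t) = ennreal (real (cnt ls Th1 i j) * v1 / h)"
  unfolding sum_c1 by (simp add: inverse_ennreal ennreal_of_nat_eq_real_of_nat ennreal_mult'[symmetric] divide_inverse)
lemma sum_c2_real: "h < 1 \<Longrightarrow> v2 > 0 \<Longrightarrow> (\<Sum>t\<in>{i..<j}. c2 ls v2 h t) = ennreal (real (cnt ls Th2 i j) * v2 / (1-h))"
  unfolding sum_c2 by (simp add: inverse_ennreal ennreal_of_nat_eq_real_of_nat ennreal_mult'[symmetric] divide_inverse)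

lemma A_enn:
  assumes v: "v1 > 0" "v2 > 0" and h: "0 \<le> h" "h < 1" and D: "0 < Dv ls (ethr v1 v2 h) i j"
  shows "(\<Sum>t\<in>{i..<j}. c2 ls v2 h t) \<le> (\<Sum>t\<in>{i..<j}. c1 ls v1 h t)"
proof (cases "h = 0")
  case True
  hence "cnt ls Th1 i j > 0" using D v by (simp add: ethr0 Dv_def)
  thus ?thesis unfolding sum_c1 using True v by (simp add: ennreal_mult_top ennreal_of_nat_eq_real_of_nat)
next
  case False
  hence hp: "0 < h" using h by simp
  show ?thesis unfolding sum_c1_real[OF hp v(1)] sum_c2_real[OF h(2) v(2)]
    using sign_rel(1)[OF v hp h(2), of "real (cnt ls Th1 i j)" "real (cnt ls Th2 i j)"] D
    by (auto simp: Dv_def intro!: ennreal_leI)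
qed

lemma B_enn:
  assumes v: "v1 > 0" "v2 > 0" and h: "0 \<le> h" "h < 1" and D: "Dv ls (ethr v1 v2 h) i j \<le> 0"
  shows "(\<Sum>t\<in>{i..<j}. c1 ls v1 h t) \<le> (\<Sum>t\<in>{i..<j}. c2 ls v2 h t)"
proof (cases "h = 0")
  case True
  hence "cnt ls Th1 i j = 0" using D v by (simp add: ethr0 Dv_def)
  thus ?thesis unfolding sum_c1 by simp
next
  case False
  hence hp: "0 < h" using h by simp
  show ?thesis unfolding sum_c1_real[OF hp v(1)] sum_c2_real[OF h(2) v(2)]
    using sign_rel(2)[OF v hp h(2), of "real (cnt ls Th1 i j)" "real (cnt ls Th2 i j)"] D
    by (auto simp: Dv_def intro!: ennreal_leI)
qed

lemma A_strict:
  assumes v: "v1 > 0" "v2 > 0" and h: "0 < h" "h < 1" and D: "0 < Dv ls (ethr v1 v2 h) i j"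
  shows "(\<Sum>t\<in>{i..<j}. c2 ls v2 h t) < (\<Sum>t\<in>{i..<j}. c1 ls v1 h t)"
  unfolding sum_c1_real[OF h(1) v(1)] sum_c2_real[OF h(2) v(2)]
  using sign_rel(1)[OF v h, of "real (cnt ls Th1 i j)" "real (cnt ls Th2 i j)"] D h v
  by (simp add: Dv_def ennreal_less_iff)

lemma B_strict:
  assumes v: "v1 > 0" "v2 > 0" and h: "0 < h" "h < 1" and D: "Dv ls (ethr v1 v2 h) i j < 0"
  shows "(\<Sum>t\<in>{i..<j}. c1 ls v1 h t) < (\<Sum>t\<in>{i..<j}. c2 ls v2 h t)"
  unfolding sum_c1_real[OF h(1) v(1)] sum_c2_real[OF h(2) v(2)]
  using sign_rel(3)[OF v h, of "real (cnt ls Th1 i j)" "real (cnt ls Th2 i j)"] D h v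
  by (simp add: Dv_def ennreal_less_iff)

definition Gs :: "(nat \<Rightarrow> 'a::comm_monoid_add) \<Rightarrow> (nat \<Rightarrow> 'a) \<Rightarrow> nat \<Rightarrow> nat \<Rightarrow> 'a" where
  "Gs f g T k = (\<Sum>t<T. if t < k then f t else g t)"

lemma Gs_split:
  assumes "k0 \<le> k" "k \<le> T"
  shows "Gs f g T k = sum f {..<k0} + sum f {k0..<k} + sum g {k..<T}"
    "Gs f g T k0 = sum f {..<k0} + sum g {k0..<k} + sum g {k..<T}"
proof -
  have split: "(\<Sum>t<T. F t) = sum F {..<k0} + sum F {k0..<k} + sum F {k..<T}" for F :: "nat \<Rightarrow> 'a"
    using assms by (simp add: lessThan_atLeast0 sum.atLeastLessThan_concat)
  show "Gs f g T k = sum f {..<k0} + sum f {k0..<k} + sum g {k..<T}"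
    unfolding Gs_def split[of "\<lambda>t. if t < k then f t else g t"] using assms
    by (intro arg_cong2[where f="(+)"] sum.cong) auto
  show "Gs f g T k0 = sum f {..<k0} + sum g {k0..<k} + sum g {k..<T}"
    unfolding Gs_def split[of "\<lambda>t. if t < k0 then f t else g t"] using assms
    by (intro arg_cong2[where f="(+)"] sum.cong) auto
qed

lemma cut_exists:
  fixes T :: nat and q :: "nat \<Rightarrow> real"
  assumes "\<And>s t. s \<le> t \<Longrightarrow> t < T \<Longrightarrow> q s \<le> q t"
  shows "\<exists>k\<le>T. \<forall>t<T. (q t \<le> h \<longleftrightarrow> t < k)"
proof (cases "\<forall>t<T. q t \<le> h")
  case True thus ?thesis by (intro exI[of _ T]) auto
next
  case False
  define k where "k = (LEAST t. t < T \<and> \<not> q t \<le> h)"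
  have k: "k < T" "\<not> q k \<le> h" using LeastI_ex[of "\<lambda>t. t < T \<and> \<not> q t \<le> h"] False k_def by auto
  have "\<forall>t<T. (q t \<le> h \<longleftrightarrow> t < k)"
  proof (intro allI impI)
    fix t assume t: "t < T"
    show "q t \<le> h \<longleftrightarrow> t < k"
    proof
      assume "q t \<le> h" thus "t < k" using assms[of k t] k t by (cases "k \<le> t") auto
    next
      assume "t < k" thus "q t \<le> h" using not_less_Least[of t "\<lambda>t. t < T \<and> \<not> q t \<le> h"] k_def k t by auto
    qed
  qed
  thus ?thesis using k by (intro exI[of _ k]) auto
qed

definition Hs :: "label list \<Rightarrow> real \<Rightarrow> real \<Rightarrow> (nat \<Rightarrow> real) \<Rightarrow> real \<Rightarrow> ennreal" where
  "Hs ls v1 v2 q h = (\<Sum>t<length ls. if q t \<le> h then c1 ls v1 h t else c2 ls v2 h t)"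

lemma Hs_Gs:
  assumes "\<forall>t<length ls. (q t \<le> h \<longleftrightarrow> t < k)"
  shows "Hs ls v1 v2 q h = Gs (c1 ls v1 h) (c2 ls v2 h) (length ls) k"
  unfolding Hs_def Gs_def using assms by (intro sum.cong) auto

lemma PAV_cut:
  assumes v: "v1 > 0" "v2 > 0" and h: "0 \<le> h" "h \<le> 1"
  obtains ks where "ks \<le> length ls"
    "\<forall>t<length ls. (phi v1 v2 (PAV ls 1 1 t) \<le> h \<longleftrightarrow> t < ks)"
    "\<forall>t<length ls. (PAV ls 1 1 t \<le> ethr v1 v2 h \<longleftrightarrow> t < ks)"
proof -
  obtain ks where ks: "ks \<le> length ls" "\<forall>t<length ls. (PAV ls 1 1 t \<le> ethr v1 v2 h \<longleftrightarrow> t < ks)"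
    using cut_exists[of "length ls" "\<lambda>t. PAV ls 1 1 t" "ethr v1 v2 h"] PAV_mono by blast
  moreover have "\<forall>t<length ls. (phi v1 v2 (PAV ls 1 1 t) \<le> h \<longleftrightarrow> t < ks)"
    using ks phi_cmp(1)[OF v _ _ h] PAV_range by simp
  ultimately show ?thesis using that by blast
qed

lemma pw_le:
  assumes v: "v1 > 0" "v2 > 0" and h: "0 \<le> h" "h < 1"
    and qm: "\<And>s t. s \<le> t \<Longrightarrow> t < length ls \<Longrightarrow> q s \<le> q t"
  shows "Hs ls v1 v2 (\<lambda>t. phi v1 v2 (PAV ls 1 1 t)) h \<le> Hs ls v1 v2 q h"
proof -
  define e where "e = ethr v1 v2 h"
  obtain ks where ks: "ks \<le> (length ls)" "\<forall>t<(length ls). (phi v1 v2 (PAV ls 1 1 t) \<le> h \<longleftrightarrow> t < ks)"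
    "\<forall>t<(length ls). (PAV ls 1 1 t \<le> e \<longleftrightarrow> t < ks)"
    using PAV_cut[OF v h(1) less_imp_le[OF h(2)], of ls] unfolding e_def by blast
  obtain k where k: "k \<le> (length ls)" "\<forall>t<(length ls). (q t \<le> h \<longleftrightarrow> t < k)"
    using cut_exists[of "length ls" q h, OF qm] by blast
  have E1: "Hs ls v1 v2 (\<lambda>t. phi v1 v2 (PAV ls 1 1 t)) h = Gs (c1 ls v1 h) (c2 ls v2 h) (length ls) ks"
    by (rule Hs_Gs[OF ks(2)])
  have E2: "Hs ls v1 v2 q h = Gs (c1 ls v1 h) (c2 ls v2 h) (length ls) k"
    by (rule Hs_Gs[OF k(2)])
  show ?thesis unfolding E1 E2
  proof (cases "ks \<le> k")
    case True
    have S: "(\<Sum>t\<in>{ks..<k}. c2 ls v2 h t) \<le> (\<Sum>t\<in>{ks..<k}. c1 ls v1 h t)"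
    proof (cases "ks = k")
      case False
      hence kk: "ks < k" using True by simp
      have a1: "ks < length ls" using kk k by simp
      have "\<not> PAV ls 1 1 ks \<le> e" using ks(3) a1 by simp
      hence a2: "e < PAV ls 1 1 ks" by simp
      have a3: "ks = 0 \<or> PAV ls 1 1 (ks-1) \<le> e" using ks(3) a1 by (cases ks) auto
      have "0 < Dv ls e ks (Suc (k-1))"
        using K1[OF a1 a2 a3, of "k-1"] kk k by simp
      hence "0 < Dv ls e ks k" using kk by simp
      thus ?thesis using A_enn[OF v h] unfolding e_def by blast
    qed simp
    show "Gs (c1 ls v1 h) (c2 ls v2 h) (length ls) ks \<le> Gs (c1 ls v1 h) (c2 ls v2 h) (length ls) k"
      unfolding Gs_split[OF True k(1)] by (rule add_mono[OF add_mono[OF order_refl S] order_refl])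
  next
    case False
    hence kk: "k < ks" by simp
    have "Dv ls e k ks \<le> 0"
    proof -
      have b1: "0 < ks" "ks \<le> length ls" using kk ks(1) by auto
      have b2: "PAV ls 1 1 (ks-1) \<le> e" using ks(3) b1 by simp
      have b3: "ks = length ls \<or> e < PAV ls 1 1 ks"
      proof (cases "ks = length ls")
        case False
        hence "ks < length ls" using b1 by simp
        hence "\<not> PAV ls 1 1 ks \<le> e" using ks(3) by simp
        thus ?thesis by simp
      qed simp
      show ?thesis using K2[OF b1 b2 b3 kk] .
    qed
    hence S: "(\<Sum>t\<in>{k..<ks}. c1 ls v1 h t) \<le> (\<Sum>t\<in>{k..<ks}. c2 ls v2 h t)"
      using B_enn[OF v h] unfolding e_def by blast
    show "Gs (c1 ls v1 h) (c2 ls v2 h) (length ls) ks \<le> Gs (c1 ls v1 h) (c2 ls v2 h) (length ls) k"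
      unfolding Gs_split[OF less_imp_le[OF kk] ks(1)] by (rule add_mono[OF add_mono[OF order_refl S] order_refl])
  qed
qed

lemma sum_c_fin:
  assumes "0 < h" "h < 1" "v1 > 0" "v2 > 0"
  shows "sum (c1 ls v1 h) {i..<j} \<noteq> \<top>" "sum (c2 ls v2 h) {i..<j} \<noteq> \<top>"
  using sum_c1_real[of h v1 ls i j] sum_c2_real[of h v2 ls i j] assms by auto

lemma pw_lt:
  assumes v: "v1 > 0" "v2 > 0" and h: "0 < h" "h < 1"
    and qm: "\<And>s t. s \<le> t \<Longrightarrow> t < length ls \<Longrightarrow> q s \<le> q t"
    and notin: "\<forall>t<length ls. phi v1 v2 (PAV ls 1 1 t) \<noteq> h"
    and t0: "t0 < length ls" "(q t0 \<le> h) \<noteq> (phi v1 v2 (PAV ls 1 1 t0) \<le> h)"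
  shows "Hs ls v1 v2 (\<lambda>t. phi v1 v2 (PAV ls 1 1 t)) h < Hs ls v1 v2 q h"
proof -
  define e where "e = ethr v1 v2 h"
  have h': "0 \<le> h" "h < 1" using h by auto
  obtain ks where ks: "ks \<le> (length ls)" "\<forall>t<(length ls). (phi v1 v2 (PAV ls 1 1 t) \<le> h \<longleftrightarrow> t < ks)"
    "\<forall>t<(length ls). (PAV ls 1 1 t \<le> e \<longleftrightarrow> t < ks)"
    using PAV_cut[OF v h'(1) less_imp_le[OF h'(2)], of ls] unfolding e_def by blast
  obtain k where k: "k \<le> (length ls)" "\<forall>t<(length ls). (q t \<le> h \<longleftrightarrow> t < k)"
    using cut_exists[of "length ls" q h, OF qm] by blast
  have E1: "Hs ls v1 v2 (\<lambda>t. phi v1 v2 (PAV ls 1 1 t)) h = Gs (c1 ls v1 h) (c2 ls v2 h) (length ls) ks"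
    by (rule Hs_Gs[OF ks(2)])
  have E2: "Hs ls v1 v2 q h = Gs (c1 ls v1 h) (c2 ls v2 h) (length ls) k"
    by (rule Hs_Gs[OF k(2)])
  have kne: "k \<noteq> ks" using t0 k ks by auto
  have fin: "sum (c1 ls v1 h) {..<i} \<noteq> \<top>" "sum (c2 ls v2 h) {i..<j} \<noteq> \<top>" for i j
    using sum_c_fin[OF h v] by (auto simp: lessThan_atLeast0)
  have key: "a + s2 + b < a + s1 + b" if "a \<noteq> \<top>" "b \<noteq> \<top>" "s2 < s1" for a b s1 s2 :: ennreal
  proof -
    have "b + (a + s2) < b + (a + s1)" using that by (simp add: ennreal_add_left_cancel_less)
    thus ?thesis by (simp add: ac_simps)
  qed
  show ?thesis unfolding E1 E2
  proof (cases "ks \<le> k")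
    case True
    hence kk: "ks < k" using kne by simp
    have a1: "ks < length ls" using kk k by simp
    have "\<not> PAV ls 1 1 ks \<le> e" using ks(3) a1 by simp
    hence a2: "e < PAV ls 1 1 ks" by simp
    have a3: "ks = 0 \<or> PAV ls 1 1 (ks-1) \<le> e" using ks(3) a1 by (cases ks) auto
    have "0 < Dv ls e ks (Suc (k-1))"
      using K1[OF a1 a2 a3, of "k-1"] kk k by simp
    hence "0 < Dv ls e ks k" using kk by simp
    hence S: "(\<Sum>t\<in>{ks..<k}. c2 ls v2 h t) < (\<Sum>t\<in>{ks..<k}. c1 ls v1 h t)"
      using A_strict[OF v h] unfolding e_def by blast
    show "Gs (c1 ls v1 h) (c2 ls v2 h) (length ls) ks < Gs (c1 ls v1 h) (c2 ls v2 h) (length ls) k"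
      unfolding Gs_split[OF True k(1)] by (rule key[OF fin(1) fin(2) S])
  next
    case False
    hence kk: "k < ks" by simp
    have ksT: "ks - 1 < (length ls)" "ks - 1 < ks" using kk ks(1) by auto
    have "phi v1 v2 (PAV ls 1 1 (ks-1)) \<le> h" using ks(2) ksT by blast
    moreover have "phi v1 v2 (PAV ls 1 1 (ks-1)) \<noteq> h" using notin ksT by blast
    ultimately have "phi v1 v2 (PAV ls 1 1 (ks-1)) < h" by simp
    hence "PAV ls 1 1 (ks-1) < e"
      using phi_cmp(2)[OF v _ _ h'(1)] PAV_range[of "ks-1" ls] kk ks(1) h unfolding e_def by auto
    hence "Dv ls e k ks < 0"
    proof -
      have b1: "0 < ks" "ks \<le> length ls" using kk ks(1) by auto
      have b3: "ks = length ls \<or> e < PAV ls 1 1 ks"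
      proof (cases "ks = length ls")
        case False
        hence "ks < length ls" using b1 by simp
        hence "\<not> PAV ls 1 1 ks \<le> e" using ks(3) by simp
        thus ?thesis by simp
      qed simp
      show ?thesis using K2s[OF b1 _ b3 kk] \<open>PAV ls 1 1 (ks-1) < e\<close> by blast
    qed
    hence S: "(\<Sum>t\<in>{k..<ks}. c1 ls v1 h t) < (\<Sum>t\<in>{k..<ks}. c2 ls v2 h t)"
      using B_strict[OF v h] unfolding e_def by blast
    show "Gs (c1 ls v1 h) (c2 ls v2 h) (length ls) ks < Gs (c1 ls v1 h) (c2 ls v2 h) (length ls) k"
      unfolding Gs_split[OF less_imp_le[OF kk] ks(1)] by (rule key[OF fin(1) fin(2) S])
  qed
qed

lemma count_tot: "count_list xs Th1 + count_list xs Th2 = length xs"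
  by (induction xs) (auto split: label.split)

lemma sigm_ereal: "sigm (ereal r) = 1 / (1 + exp (- r))" by (simp add: sigm_def)

lemma sigm_range: "0 \<le> sigm w" "sigm w \<le> 1"
  by (cases w; simp add: sigm_def add_pos_nonneg)+

lemma sigm_strict: "a < b \<Longrightarrow> sigm a < sigm b"
proof (cases a; cases b)
  fix r s assume "a < b" "a = ereal r" "b = ereal s"
  thus ?thesis by (simp add: sigm_def frac_less2 add_pos_pos)
qed (auto simp: sigm_def add_pos_nonneg)

lemma sigm_mono: "a \<le> b \<Longrightarrow> sigm a \<le> sigm b"
  using sigm_strict by (cases "a = b") (auto simp: less_le)

lemma sigm_inj: "sigm a = sigm b \<Longrightarrow> a = b"
  using sigm_strict by (metis linorder_neqE less_irrefl)

lemma logit_mono: "0 \<le> x \<Longrightarrow> x \<le> y \<Longrightarrow> y \<le> 1 \<Longrightarrow> logit x \<le> logit y"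
  by (auto simp: logit_def divide_pos_pos intro!: frac_le)

lemma logit_mid: "0 < x \<Longrightarrow> x < 1 \<Longrightarrow> logit x = ereal (ln (x / (1 - x)))"
  by (simp add: logit_def)

lemma Q_lemma:
  fixes T1 T2 :: real and pr x :: real
  assumes T: "T1 > 0" "T2 > 0" and x: "0 \<le> x" "x \<le> 1"
  defines "v1 \<equiv> sigm (ereal pr) / T1" and "v2 \<equiv> (1 - sigm (ereal pr)) / T2"
  shows "sigm (logit x - logit (T1 / (T1 + T2)) + ereal pr) = phi v1 v2 x"
proof -
  define E where "E = exp (- pr)"
  have E: "E > 0" unfolding E_def by simp
  have s: "sigm (ereal pr) = 1 / (1 + E)" unfolding E_def by (simp add: sigm_def)
  have s1: "1 - sigm (ereal pr) = E / (1 + E)" unfolding s using E by (simp add: field_simps)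
  have lc: "logit (T1 / (T1 + T2)) = ereal (ln (T1 / T2))"
  proof -
    have "0 < T1 / (T1 + T2)" "T1 / (T1 + T2) < 1" using T by (auto simp: field_simps)
    moreover have "T1 / (T1 + T2) / (1 - T1 / (T1 + T2)) = T1 / T2"
    proof -
      have d: "1 - T1 / (T1 + T2) = T2 / (T1 + T2)" using T by (simp add: field_simps)
      show ?thesis unfolding d using T by simp
    qed
    ultimately show ?thesis by (simp only: logit_mid)
  qed
  have v1: "v1 = 1 / ((1 + E) * T1)" unfolding v1_def s by simp
  have v2: "v2 = E / ((1 + E) * T2)" unfolding v2_def s1 by simp
  show ?thesis
  proof (cases "x = 0 \<or> x = 1")
    case True
    thus ?thesis
    proof
      assume "x = 0" thus ?thesis using T by (simp add: lc logit_def sigm_def phi_def)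
    next
      assume "x = 1" thus ?thesis using T E by (simp add: lc logit_def sigm_def phi_def v1)
    qed
  next
    case False
    hence x': "0 < x" "x < 1" using x by auto
    have "logit x - logit (T1 / (T1 + T2)) + ereal pr = ereal (ln (x / (1 - x)) - ln (T1 / T2) + pr)"
      using x' by (simp add: logit_mid lc)
    moreover have "exp (- (ln (x / (1 - x)) - ln (T1 / T2) + pr)) = ((1 - x) / x) * (T1 / T2) * E"
    proof -
      have "- (ln (x / (1 - x)) - ln (T1 / T2) + pr) = ln (T1 / T2) - ln (x / (1 - x)) + (- pr)" by simp
      hence "exp (- (ln (x / (1 - x)) - ln (T1 / T2) + pr)) = exp (ln (T1 / T2)) / exp (ln (x / (1 - x))) * E"
        unfolding E_def by (simp only: exp_add exp_diff)
      also have "\<dots> = (T1 / T2) / (x / (1 - x)) * E" using T x' by simp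
      finally show ?thesis using x' by (simp add: field_simps)
    qed
    ultimately have "sigm (logit x - logit (T1 / (T1 + T2)) + ereal pr) = 1 / (1 + ((1 - x) / x) * (T1 / T2) * E)"
      by (simp add: sigm_def)
    also have "\<dots> = x*T2/(x*T2 + (1-x)*E*T1)"
      using T E x' by (simp add: field_simps)
    also have "\<dots> = phi v1 v2 x"
    proof -
      define K where "K = (1 + E) * T1 * T2"
      have K: "K > 0" unfolding K_def using T E by simp
      have E1: "1 + E \<noteq> 0" "T1 + E * T1 \<noteq> 0" "T2 + E * T2 \<noteq> 0" using E T
        by (smt (verit) mult_pos_pos)+
      have phiK: "phi v1 v2 x = (x* v1*K)/((x* v1 + (1-x)* v2)*K)" using K by (simp add: phi_def)
      have vk1: "v1 * K = T2" unfolding v1 K_def using T E E1 by (simp add: field_simps)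
      have vk2: "v2 * K = E * T1" unfolding v2 K_def using T E E1 by (simp add: field_simps)
      have "x* v1*K = x*T2" using vk1 by (simp add: mult.assoc)
      moreover have "(x* v1 + (1-x)* v2)*K = x*(v1*K) + (1-x)*(v2*K)" by (simp add: algebra_simps)
      hence "(x* v1 + (1-x)* v2)*K = x*T2 + (1-x)*E*T1" unfolding vk1 vk2 by (simp add: mult.assoc)
      ultimately have "phi v1 v2 x = x*T2/(x*T2 + (1-x)*E*T1)"
        using phiK by simp
      thus ?thesis by simp
    qed
    finally show ?thesis .
  qed
qed

lemma phi_range:
  assumes "v1 > 0" "v2 > 0" "0 \<le> x" "x \<le> 1"
  shows "0 \<le> phi v1 v2 x" "phi v1 v2 x \<le> 1"
proof -
  have d: "x * v1 + (1 - x) * v2 > 0"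
  proof (cases "x = 0")
    case False thus ?thesis using assms by (smt (verit) mult_nonneg_nonneg mult_pos_pos)
  qed (use assms in simp)
  show "0 \<le> phi v1 v2 x" unfolding phi_def using d assms by simp
  show "phi v1 v2 x \<le> 1" unfolding phi_def using d assms by (simp add: divide_le_eq)
qed

definition hh :: "label \<Rightarrow> real \<Rightarrow> real \<Rightarrow> ennreal" where
  "hh l q x = (case l of Th1 \<Rightarrow> indicator {q..1} x * inverse (ennreal x)
      | Th2 \<Rightarrow> indicator {0..<q} x * inverse (ennreal (1 - x)))"

lemma Crho_hh: "Crho rho l q = (\<integral>\<^sup>+x. hh l q x \<partial>rho)"
  by (cases l) (simp_all add: Crho_def hh_def)

lemma hh_meas_borel: "hh l q \<in> borel_measurable borel"
  unfolding hh_def by (cases l) (simp_all, measurable)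

lemma hh_meas: "sets rho = sets borel \<Longrightarrow> hh l q \<in> borel_measurable rho"
  using hh_meas_borel measurable_cong_sets[of rho borel "borel :: ennreal measure" borel] by simp

definition HF :: "label list \<Rightarrow> real \<Rightarrow> (nat \<Rightarrow> real) \<Rightarrow> real \<Rightarrow> ennreal" where
  "HF ls pr q x = (\<Sum>t<length ls. ennreal (lweight ls pr (ls!t)) * hh (ls!t) (q t) x)"

lemma HF_meas: "sets rho = sets borel \<Longrightarrow> HF ls pr q \<in> borel_measurable rho"
  unfolding HF_def using hh_meas by measurable

lemma Jobj_HF:
  assumes "sets rho = sets borel"
  shows "Jobj rho pr ls ws = (\<integral>\<^sup>+x. HF ls pr (\<lambda>t. sigm (ws!t + ereal pr)) x \<partial>rho)"
  unfolding Jobj_def HF_def Crho_hh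
  using assms hh_meas by (subst nn_integral_sum) (auto simp: nn_integral_cmult)

lemma HF_Hs:
  assumes x: "0 \<le> x" "x < 1" and q: "\<forall>t<length ls. 0 \<le> q t \<and> q t \<le> 1"
  shows "HF ls pr q x = Hs ls (lweight ls pr Th1) (lweight ls pr Th2) q x"
  unfolding HF_def Hs_def
proof (intro sum.cong refl)
  fix t assume "t \<in> {..<length ls}"
  thus "ennreal (lweight ls pr (ls!t)) * hh (ls!t) (q t) x =
     (if q t \<le> x then c1 ls (lweight ls pr Th1) x t else c2 ls (lweight ls pr Th2) x t)"
    using x q by (cases "ls!t") (auto simp: hh_def c1_def c2_def indicator_def)
qed

lemma HF_out:
  assumes x: "x < 0 \<or> 1 < x" and q: "\<forall>t<length ls. 0 \<le> q t \<and> q t \<le> 1"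
  shows "HF ls pr q x = 0"
  unfolding HF_def
proof (intro sum.neutral ballI)
  fix t assume "t \<in> {..<length ls}"
  thus "ennreal (lweight ls pr (ls!t)) * hh (ls!t) (q t) x = 0"
    using x q by (cases "ls!t") (auto simp: hh_def indicator_def)
qed

lemma HF_one:
  assumes q: "\<forall>t<length ls. 0 \<le> q t \<and> q t \<le> 1" and q': "\<forall>t<length ls. 0 \<le> q' t \<and> q' t \<le> 1"
  shows "HF ls pr q 1 = HF ls pr q' 1"
  unfolding HF_def
proof (intro sum.cong refl)
  fix t assume "t \<in> {..<length ls}"
  thus "ennreal (lweight ls pr (ls!t)) * hh (ls!t) (q t) 1 = ennreal (lweight ls pr (ls!t)) * hh (ls!t) (q' t) 1"
    using q q' by (cases "ls!t") (auto simp: hh_def indicator_def)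
qed

lemma sigm_pos: "0 < sigm (ereal r)" "sigm (ereal r) < 1"
  by (simp_all add: sigm_def add_pos_pos)

lemma v_pos:
  assumes "count_list ls Th1 \<ge> 1" "count_list ls Th2 \<ge> 1"
  shows "lweight ls pr Th1 > 0" "lweight ls pr Th2 > 0"
  using assms sigm_pos[of pr] by (auto simp: lweight_def)

lemma sol_nth:
  assumes "t < length ls"
  shows "pav_solution ls ! t = logit (PAV ls 1 1 t) - logit (real (count_list ls Th1) / real (length ls))"
  using assms by (simp add: pav_solution_def)

lemma qs_eq:
  assumes c: "count_list ls Th1 \<ge> 1" "count_list ls Th2 \<ge> 1" and t: "t < length ls"
  shows "sigm (pav_solution ls ! t + ereal pr) = phi (lweight ls pr Th1) (lweight ls pr Th2) (PAV ls 1 1 t)"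
proof -
  have L: "real (length ls) = real (count_list ls Th1) + real (count_list ls Th2)"
    using count_tot[of ls] by (metis of_nat_add)
  show ?thesis unfolding sol_nth[OF t] L
    using Q_lemma[of "real (count_list ls Th1)" "real (count_list ls Th2)" "PAV ls 1 1 t" pr] c PAV_range[OF t]
    by (simp add: lweight_def)
qed

lemma sol_feasible: "feasible (length ls) (pav_solution ls)"
  unfolding feasible_def
proof
  show "length (pav_solution ls) = length ls" by (simp add: pav_solution_def)
  show "sorted (pav_solution ls)"
    unfolding sorted_iff_nth_mono
  proof (intro allI impI)
    fix i j assume ij: "i \<le> j" "j < length (pav_solution ls)"
    hence j: "j < length ls" by (simp add: pav_solution_def)
    have "logit (PAV ls 1 1 i) \<le> logit (PAV ls 1 1 j)"
      using logit_mono PAV_range PAV_mono ij j by (meson le_less_trans)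
    thus "pav_solution ls ! i \<le> pav_solution ls ! j"
      unfolding sol_nth[OF j] sol_nth[OF le_less_trans[OF ij(1) j]]
      by (intro ereal_minus_mono order_refl)
  qed
qed

lemma feasible_q:
  assumes "feasible (length ls) ws"
  shows "\<And>s t. s \<le> t \<Longrightarrow> t < length ls \<Longrightarrow> sigm (ws!s + ereal pr) \<le> sigm (ws!t + ereal pr)"
  using assms unfolding feasible_def sorted_iff_nth_mono
  by (auto intro!: sigm_mono add_right_mono)

lemma pointwise_le:
  assumes c: "count_list ls Th1 \<ge> 1" "count_list ls Th2 \<ge> 1" and f: "feasible (length ls) ws"
  shows "HF ls pr (\<lambda>t. sigm (pav_solution ls ! t + ereal pr)) x \<le> HF ls pr (\<lambda>t. sigm (ws ! t + ereal pr)) x"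
proof -
  define v1 where "v1 = lweight ls pr Th1"
  define v2 where "v2 = lweight ls pr Th2"
  have v: "v1 > 0" "v2 > 0" using v_pos[OF c] unfolding v1_def v2_def by auto
  define qs where "qs = (\<lambda>t. phi v1 v2 (PAV ls 1 1 t))"
  define q where "q = (\<lambda>t. sigm (ws ! t + ereal pr))"
  have HFs: "HF ls pr (\<lambda>t. sigm (pav_solution ls ! t + ereal pr)) y = HF ls pr qs y" for y
    unfolding HF_def qs_def v1_def v2_def by (intro sum.cong refl) (simp add: qs_eq[OF c])
  have qsr: "\<forall>t<length ls. 0 \<le> qs t \<and> qs t \<le> 1" unfolding qs_def using phi_range[OF v] PAV_range by auto
  have qr: "\<forall>t<length ls. 0 \<le> q t \<and> q t \<le> 1" unfolding q_def using sigm_range by auto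
  have qm: "\<And>s t. s \<le> t \<Longrightarrow> t < length ls \<Longrightarrow> q s \<le> q t" unfolding q_def using feasible_q[OF f] .
  have "HF ls pr qs x \<le> HF ls pr q x"
  proof (cases "x < 0 \<or> 1 < x")
    case True thus ?thesis using HF_out qsr qr by simp
  next
    case False
    show ?thesis
    proof (cases "x = 1")
      case True thus ?thesis using HF_one[OF qsr qr] by simp
    next
      case False
      hence x: "0 \<le> x" "x < 1" using \<open>\<not> (x < 0 \<or> 1 < x)\<close> by auto
      show ?thesis unfolding HF_Hs[OF x qsr] HF_Hs[OF x qr] v1_def[symmetric] v2_def[symmetric]
        unfolding qs_def by (rule pw_le[OF v x qm])
    qed
  qed
  thus ?thesis unfolding HFs q_def .
qed

lemma existence:
  assumes c: "count_list ls Th1 \<ge> 1" "count_list ls Th2 \<ge> 1" and r: "rbpsr_dist rho"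
  shows "is_minimizer rho pr ls (pav_solution ls)"
  unfolding is_minimizer_def
proof (intro conjI allI impI sol_feasible)
  fix ws assume f: "feasible (length ls) ws"
  have s: "sets rho = sets borel" using r by (simp add: rbpsr_dist_def)
  show "Jobj rho pr ls (pav_solution ls) \<le> Jobj rho pr ls ws"
    unfolding Jobj_HF[OF s] by (intro nn_integral_mono pointwise_le[OF c f])
qed

lemma Crho_fin1:
  assumes ps: "prob_space rho" and q: "0 < q"
  shows "Crho rho Th1 q \<noteq> \<infinity>"
proof -
  have "Crho rho Th1 q \<le> (\<integral>\<^sup>+x. ennreal (1/q) \<partial>rho)"
    unfolding Crho_hh
  proof (intro nn_integral_mono)
    fix x
    show "hh Th1 q x \<le> ennreal (1/q)"
    proof (cases "q \<le> x \<and> x \<le> 1")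
      case True
      hence "inverse (ennreal x) = ennreal (inverse x)" using q by (simp add: inverse_ennreal)
      moreover have "inverse x \<le> 1/q" using True q by (simp add: le_imp_inverse_le divide_inverse)
      ultimately show ?thesis using True by (simp add: hh_def ennreal_leI)
    qed (auto simp: hh_def)
  qed
  also have "\<dots> = ennreal (1/q)" using prob_space.emeasure_space_1[OF ps] by simp
  finally show ?thesis using neq_top_trans[OF ennreal_neq_top] by auto
qed

lemma Crho_fin2:
  assumes ps: "prob_space rho" and q: "q < 1"
  shows "Crho rho Th2 q \<noteq> \<infinity>"
proof -
  have "Crho rho Th2 q \<le> (\<integral>\<^sup>+x. ennreal (1/(1-q)) \<partial>rho)"
    unfolding Crho_hh
  proof (intro nn_integral_mono)
    fix x
    show "hh Th2 q x \<le> ennreal (1/(1-q))"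
    proof (cases "0 \<le> x \<and> x < q")
      case True
      hence "inverse (ennreal (1-x)) = ennreal (inverse (1-x))" using q by (simp add: inverse_ennreal)
      moreover have "inverse (1-x) \<le> 1/(1-q)" using True q by (simp add: le_imp_inverse_le divide_inverse)
      ultimately show ?thesis using True by (simp add: hh_def ennreal_leI)
    qed (auto simp: hh_def)
  qed
  also have "\<dots> = ennreal (1/(1-q))" using prob_space.emeasure_space_1[OF ps] by simp
  finally show ?thesis using neq_top_trans[OF ennreal_neq_top] by auto
qed

lemma cnt_single: "cnt ls x t (Suc t) = (if ls!t = x then 1 else 0)"
  by (simp add: cnt_def)

lemma PAV_pos:
  assumes t: "t < length ls" and l: "ls!t = Th1"
  shows "0 < PAV ls 1 1 t"
proof -
  have "\<forall>j. t \<le> j \<and> j < length ls \<longrightarrow> 0 < Dv ls 0 t (Suc j)"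
  proof (intro allI impI)
    fix j assume j: "t \<le> j \<and> j < length ls"
    have "cnt ls Th1 t (Suc j) = cnt ls Th1 t (Suc t) + cnt ls Th1 (Suc t) (Suc j)"
      using cnt_add[of t "Suc t" "Suc j"] j by simp
    hence "cnt ls Th1 t (Suc j) \<ge> 1" using l by (simp add: cnt_single)
    thus "0 < Dv ls 0 t (Suc j)" by (simp add: Dv_def)
  qed
  thus ?thesis using PAV_cmp(1)[OF t, of 0] by blast
qed

lemma PAV_lt1:
  assumes t: "t < length ls" and l: "ls!t = Th2"
  shows "PAV ls 1 1 t < 1"
proof -
  have "\<forall>i\<le>t. \<exists>j. t \<le> j \<and> j < length ls \<and> Dv ls 1 i (Suc j) < 0"
  proof (intro allI impI)
    fix i assume i: "i \<le> t"
    have "cnt ls Th2 i (Suc t) = cnt ls Th2 i t + cnt ls Th2 t (Suc t)"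
      using cnt_add[of i t "Suc t"] i by simp
    hence "cnt ls Th2 i (Suc t) \<ge> 1" using l by (simp add: cnt_single)
    hence "Dv ls 1 i (Suc t) < 0" by (simp add: Dv_def)
    thus "\<exists>j. t \<le> j \<and> j < length ls \<and> Dv ls 1 i (Suc j) < 0" using t by blast
  qed
  thus ?thesis using PAV_cmp(3)[OF t, of 1] by blast
qed

lemma phi_pos: "v1 > 0 \<Longrightarrow> v2 > 0 \<Longrightarrow> 0 < x \<Longrightarrow> x \<le> 1 \<Longrightarrow> 0 < phi v1 v2 x"
  using phi_cmp(1)[of v1 v2 x 0] by (simp add: ethr0)

lemma phi_lt1: "v1 > 0 \<Longrightarrow> v2 > 0 \<Longrightarrow> 0 \<le> x \<Longrightarrow> x < 1 \<Longrightarrow> phi v1 v2 x < 1"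
  using phi_cmp(2)[of v1 v2 x 1] by (simp add: ethr_def)

lemma sol_fin:
  assumes c: "count_list ls Th1 \<ge> 1" "count_list ls Th2 \<ge> 1" and ps: "prob_space rho"
  shows "Jobj rho pr ls (pav_solution ls) \<noteq> \<infinity>"
proof -
  have v: "lweight ls pr Th1 > 0" "lweight ls pr Th2 > 0" using v_pos[OF c] by auto
  have "ennreal (lweight ls pr (ls ! t)) * Crho rho (ls ! t) (sigm (pav_solution ls ! t + ereal pr)) \<noteq> \<infinity>"
    if t: "t < length ls" for t
  proof -
    have "Crho rho (ls ! t) (sigm (pav_solution ls ! t + ereal pr)) \<noteq> \<infinity>"
      unfolding qs_eq[OF c t]
    proof (cases "ls!t")
      case Th1
      thus "Crho rho (ls ! t) (phi (lweight ls pr Th1) (lweight ls pr Th2) (PAV ls 1 1 t)) \<noteq> \<infinity>"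
        using Crho_fin1[OF ps phi_pos[OF v PAV_pos[OF t Th1] PAV_range(2)[OF t]]] by simp
    next
      case Th2
      thus "Crho rho (ls ! t) (phi (lweight ls pr Th1) (lweight ls pr Th2) (PAV ls 1 1 t)) \<noteq> \<infinity>"
        using Crho_fin2[OF ps phi_lt1[OF v PAV_range(1)[OF t] PAV_lt1[OF t Th2]]] by simp
    qed
    thus ?thesis by (simp add: ennreal_mult_eq_top_iff)
  qed
  thus ?thesis unfolding Jobj_def by (simp add: ennreal_sum_eq_top)
qed

lemma ereal_add_cancel_r: "a + ereal r = b + ereal r \<Longrightarrow> a = b"
  by (cases a; cases b) auto

lemma uniqueness:
  assumes c: "count_list ls Th1 \<ge> 1" "count_list ls Th2 \<ge> 1"
    and r: "rbpsr_dist rho" and fs: "full_support rho" and m: "is_minimizer rho pr ls ws"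
  shows "ws = pav_solution ls"
proof (rule ccontr)
  assume ne: "ws \<noteq> pav_solution ls"
  have s: "sets rho = sets borel" and ps: "prob_space rho" using r by (auto simp: rbpsr_dist_def)
  have sp: "space rho = UNIV" using sets_eq_imp_space_eq[OF s] by simp
  have f: "feasible (length ls) ws" using m by (simp add: is_minimizer_def)
  have len: "length ws = length ls" using f by (simp add: feasible_def)
  have lens: "length (pav_solution ls) = length ls" by (simp add: pav_solution_def)
  obtain t0 where t0: "t0 < length ls" "ws ! t0 \<noteq> pav_solution ls ! t0"
    using ne len lens nth_equalityI[of ws "pav_solution ls"] by auto
  define v1 where "v1 = lweight ls pr Th1"
  define v2 where "v2 = lweight ls pr Th2"
  have v: "v1 > 0" "v2 > 0" using v_pos[OF c] unfolding v1_def v2_def by auto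
  define qs where "qs = (\<lambda>t. phi v1 v2 (PAV ls 1 1 t))"
  define q where "q = (\<lambda>t. sigm (ws ! t + ereal pr))"
  have qs_sol: "qs t = sigm (pav_solution ls ! t + ereal pr)" if "t < length ls" for t
    unfolding qs_def v1_def v2_def using qs_eq[OF c that] by simp
  have HFs: "HF ls pr (\<lambda>t. sigm (pav_solution ls ! t + ereal pr)) y = HF ls pr qs y" for y
    unfolding HF_def by (intro sum.cong refl) (simp add: qs_sol)
  have qsr: "\<forall>t<length ls. 0 \<le> qs t \<and> qs t \<le> 1" unfolding qs_def using phi_range[OF v] PAV_range by auto
  have qr: "\<forall>t<length ls. 0 \<le> q t \<and> q t \<le> 1" unfolding q_def using sigm_range by auto
  have qm: "\<And>s t. s \<le> t \<Longrightarrow> t < length ls \<Longrightarrow> q s \<le> q t" unfolding q_def using feasible_q[OF f] .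
  have qne: "q t0 \<noteq> qs t0"
    unfolding q_def qs_sol[OF t0(1)] using t0(2) sigm_inj ereal_add_cancel_r by metis
  define lo where "lo = min (q t0) (qs t0)"
  define hi where "hi = max (q t0) (qs t0)"
  have lohi: "lo < hi" "0 \<le> lo" "hi \<le> 1" using qne qr qsr t0(1) unfolding lo_def hi_def by auto
  define S where "S = qs ` {..<length ls}"
  define b where "b = Min (insert hi (S \<inter> {lo<..<hi}))"
  have finS: "finite (insert hi (S \<inter> {lo<..<hi}))" unfolding S_def by simp
  have b: "lo < b" "b \<le> hi" unfolding b_def using finS lohi by (auto simp: Min_gr_iff)
  have strict: "HF ls pr qs x < HF ls pr q x" if x: "lo < x" "x < b" for x
  proof -
    have x01: "0 < x" "x < 1" using x b lohi by auto
    have notin: "\<forall>t<length ls. qs t \<noteq> x"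
    proof (intro allI impI notI)
      fix t assume t: "t < length ls" "qs t = x"
      hence "x \<in> insert hi (S \<inter> {lo<..<hi})" unfolding S_def using x b by auto
      hence "b \<le> x" unfolding b_def using finS by simp
      thus False using x by simp
    qed
    have side: "(q t0 \<le> x) \<noteq> (qs t0 \<le> x)" using x b unfolding lo_def hi_def by auto
    have "Hs ls v1 v2 qs x < Hs ls v1 v2 q x"
      unfolding qs_def by (rule pw_lt[where q=q and ls=ls, OF v x01 qm notin[unfolded qs_def] t0(1) side[unfolded qs_def]])
    thus ?thesis using HF_Hs[of x ls qs pr] HF_Hs[of x ls q pr] x01 qsr qr unfolding v1_def v2_def by simp
  qed
  have fin: "(\<integral>\<^sup>+x. HF ls pr qs x \<partial>rho) \<noteq> \<infinity>"
    using sol_fin[OF c ps, of pr] unfolding Jobj_HF[OF s] HFs .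
  have le: "AE x in rho. HF ls pr qs x \<le> HF ls pr q x"
    using pointwise_le[OF c f, of pr] unfolding HFs q_def by simp
  have nle: "\<not> (AE x in rho. HF ls pr q x \<le> HF ls pr qs x)"
  proof
    assume "AE x in rho. HF ls pr q x \<le> HF ls pr qs x"
    hence "AE x in rho. x \<notin> {lo<..<b}"
      by (rule eventually_mono) (use strict in force)
    moreover have N: "{lo<..<b} \<in> sets rho" using s by simp
    moreover have eqN: "{x \<in> space rho. \<not> (x \<notin> {lo<..<b})} = {lo<..<b}" using sp by auto
    ultimately have "emeasure rho {lo<..<b} = 0"
      using AE_iff_measurable[OF N eqN] by blast
    moreover have "emeasure rho {lo<..<b} > 0" using fs b lohi unfolding full_support_def by auto
    ultimately show False by simp
  qed
  have "(\<integral>\<^sup>+x. HF ls pr qs x \<partial>rho) < (\<integral>\<^sup>+x. HF ls pr q x \<partial>rho)"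
    by (rule nn_integral_less[OF HF_meas[OF s] HF_meas[OF s] fin le nle])
  hence "Jobj rho pr ls (pav_solution ls) < Jobj rho pr ls ws"
    unfolding Jobj_HF[OF s] HFs q_def .
  moreover have "Jobj rho pr ls ws \<le> Jobj rho pr ls (pav_solution ls)"
    using m sol_feasible unfolding is_minimizer_def by blast
  ultimately show False by simp
qed

theorem theorem5p1:
  fixes ls :: "label list"
  assumes "count_list ls Th1 \<ge> 1" and "count_list ls Th2 \<ge> 1"
  shows "(\<forall>rho pr. rbpsr_dist rho \<longrightarrow> is_minimizer rho pr ls (pav_solution ls))
       \<and> (\<forall>rho pr ws. rbpsr_dist rho \<and> full_support rho \<and> is_minimizer rho pr ls ws
             \<longrightarrow> ws = pav_solution ls)"
  using existence[OF assms] uniqueness[OF assms] by blast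

end
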